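(* Let $c>0$, $\alpha\ge 0$, and let $s_{\alpha,c}:\mathbb R\to[0,1]$ be the SIGTRON function defined below. For every $n\in\{1,2,3,\dots\}$ and every $\alpha\in\left(1-\frac1n,\,1+\frac1n\right)$, the $n$-th derivative of $s_{\alpha,c}$ exists and is continuous on $\mathbb R$, and it is given by $$\nabla^n s_{\alpha,c}(x)=\begin{cases}\sum_{k=1}^n F_{n,k}(x) & \text{if } x\in\mathrm{dom}(\sigma_{\alpha,c}),\\ 0 & \text{otherwise,}\end{cases}$$ where $$F_{n,k}(x)=A_{n,k}\,\frac{c\,\big(\exp_{\alpha,c}(-x)\big)^{k-n(1-\alpha)}}{\big(c+\exp_{\alpha,c}(-x)\big)^{k+1}},\qquad A_{n,k}=(-1)^{n+k}\,k!\sum_{l=0}^n {\left[n \atop l\right]}{\left\{ l \atop k \right\}}(\alpha-1)^{n-l}.$$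
   Context: For $c>0$ and $\alpha\ge 0$ put $c_\alpha=\frac{1}{\alpha-1}c^{1-\alpha}$ (for $\alpha\ne1$). The extended exponential function is $\exp_{\alpha,c}(x)=c\exp(x)$ if $\alpha=1$ and $\exp_{\alpha,c}(x)=c\left(1-\frac{x}{c_\alpha}\right)^{1/(1-\alpha)}$ otherwise, on the restricted domain $\mathrm{dom}(\exp_{\alpha,c})=\mathbb R$ if $\alpha=1$, $\mathbb R_{\ge c_\alpha}=\{x\ge c_\alpha\}$ if $0\le\alpha<1$, and $\mathbb R_{<c_\alpha}$ if $\alpha>1$. The extended asymmetric sigmoid is $\sigma_{\alpha,c}(x)=\frac{c}{c+\exp_{\alpha,c}(-x)}$ with domain $\mathrm{dom}(\sigma_{\alpha,c})=\mathbb R$ if $\alpha=1$, $\{x\le -c_\alpha\}$ if $0\le\alpha<1$, and $\{x\ge -c_\alpha\}$ if $\alpha>1$ (where for $\alpha>1$ one sets $\sigma_{\alpha,c}(-c_\alpha)=\lim_{x\searrow -c_\alpha}\sigma_{\alpha,c}(x)=0$). SIGTRON is $s_{\alpha,c}(x)=\sigma_{\alpha,c}(x)$ if $x\in\mathrm{dom}(\sigma_{\alpha,c})$ and $s_{\alpha,c}(x)=\sigma_P(x)$ otherwise, where $\sigma_P(x)=1$ if $x\ge0$ and $0$ otherwise. ${\left[n \atop l\right]}$ denotes the (unsigned) Stirling number of the first kind, with recurrence ${\left[n \atop l\right]}=(n-1){\left[n-1 \atop l\right]}+{\left[n-1 \atop l-1\right]}$, and ${\left\{ l \atop k \right\}}$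 the Stirling number of the second kind, with recurrence ${\left\{ l \atop k \right\}}=k{\left\{ l-1 \atop k \right\}}+{\left\{ l-1 \atop k-1 \right\}}$; conventions ${\left\{0\atop0\right\}}={\left[0\atop0\right]}=1$, ${\left\{a\atop0\right\}}={\left[a\atop0\right]}=0$ for $a\ge1$, and both vanish when the lower index exceeds the upper. The convention $0^0=1$ is used in $(\alpha-1)^{n-l}$. *)

theory Defs
  imports "HOL-Analysis.Analysis" "HOL-Combinatorics.Stirling"
begin

definition c_alpha :: "real \<Rightarrow> real \<Rightarrow> real" where
  "c_alpha \<alpha> c = (1 / (\<alpha> - 1)) * c powr (1 - \<alpha>)"

text \<open>Extended exponential (the value is only meaningful on its domain).\<close>
definition exp_ext :: "real \<Rightarrow> real \<Rightarrow> real \<Rightarrow> real" where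
  "exp_ext \<alpha> c x = (if \<alpha> = 1 then c * exp x
     else c * (1 - x / c_alpha \<alpha> c) powr (1 / (1 - \<alpha>)))"

definition dom_sigma :: "real \<Rightarrow> real \<Rightarrow> real set" where
  "dom_sigma \<alpha> c = (if \<alpha> = 1 then UNIV
     else if \<alpha> < 1 then {x. x \<le> - c_alpha \<alpha> c}
     else {x. x \<ge> - c_alpha \<alpha> c})"

text \<open>Extended asymmetric sigmoid; for alpha > 1 the boundary value at -c_alpha is the limit 0.\<close>
definition sigma_ext :: "real \<Rightarrow> real \<Rightarrow> real \<Rightarrow> real" where
  "sigma_ext \<alpha> c x = (if \<alpha> > 1 \<and> x = - c_alpha \<alpha> c then 0
     else c / (c + exp_ext \<alpha> c (- x)))"

definition perceptron :: "real \<Rightarrow> real" where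
  "perceptron x = (if x \<ge> 0 then 1 else 0)"

definition sigtron :: "real \<Rightarrow> real \<Rightarrow> real \<Rightarrow> real" where
  "sigtron \<alpha> c x = (if x \<in> dom_sigma \<alpha> c then sigma_ext \<alpha> c x else perceptron x)"

text \<open>A_{n,k}; stirling = unsigned first kind, Stirling = second kind; 0^0 = 1.\<close>
definition A_coef :: "real \<Rightarrow> nat \<Rightarrow> nat \<Rightarrow> real" where
  "A_coef \<alpha> n k = (-1) ^ (n + k) * fact k *
     (\<Sum>l=0..n. real (stirling n l) * real (Stirling l k) * (\<alpha> - 1) ^ (n - l))"

definition F_term :: "real \<Rightarrow> real \<Rightarrow> nat \<Rightarrow> nat \<Rightarrow> real \<Rightarrow> real" where
  "F_term \<alpha> c n k x = A_coef \<alpha> n k *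
     (c * (exp_ext \<alpha> c (- x)) powr (real k - real n * (1 - \<alpha>)))
       / (c + exp_ext \<alpha> c (- x)) ^ (k + 1)"

text \<open>Claimed n-th derivative. At the boundary point x = -c_alpha for alpha > 1
  the formula is read as its limit, which is 0.\<close>
definition sigtron_nth_deriv :: "real \<Rightarrow> real \<Rightarrow> nat \<Rightarrow> real \<Rightarrow> real" where
  "sigtron_nth_deriv \<alpha> c n x =
     (if x \<in> dom_sigma \<alpha> c then
        (if \<alpha> > 1 \<and> x = - c_alpha \<alpha> c then 0 else (\<Sum>k=1..n. F_term \<alpha> c n k x))
      else 0)"

end

theory Submission
  imports Defs
begin


definition Bc :: "real \<Rightarrow> nat \<Rightarrow> nat \<Rightarrow> real" where
  "Bc t m k = (\<Sum>l\<le>m. real (stirling m l) * real (Stirling l k) * t ^ (m - l))"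

lemma A_Bc: "A_coef \<alpha> m k = (-1)^(m+k) * fact k * Bc (\<alpha> - 1) m k"
  by (simp add: A_coef_def Bc_def atLeast0AtMost)

lemma Bc_Suc_split:
  "Bc t (Suc m) k = real m * t * Bc t m k
     + (\<Sum>j\<le>m. real (stirling m j) * real (Stirling (Suc j) k) * t ^ (m - j))"
proof -
  have "Bc t (Suc m) k = (\<Sum>j\<le>m. real (stirling (Suc m) (Suc j)) * real (Stirling (Suc j) k) * t ^ (m - j))"
    unfolding Bc_def by (subst sum.atMost_Suc_shift) simp
  also have "\<dots> = (\<Sum>j\<le>m. real m * real (stirling m (Suc j)) * real (Stirling (Suc j) k) * t ^ (m - j))
     + (\<Sum>j\<le>m. real (stirling m j) * real (Stirling (Suc j) k) * t ^ (m - j))"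
    by (simp add: sum.distrib[symmetric] algebra_simps)
  also have "(\<Sum>j\<le>m. real m * real (stirling m (Suc j)) * real (Stirling (Suc j) k) * t ^ (m - j))
      = real m * t * Bc t m k"
  proof -
    have "(\<Sum>j\<le>m. real m * real (stirling m (Suc j)) * real (Stirling (Suc j) k) * t ^ (m - j))
       = (\<Sum>j<m. real m * t * (real (stirling m (Suc j)) * real (Stirling (Suc j) k) * t ^ (m - Suc j)))"
      apply (simp add: lessThan_Suc_atMost[symmetric])
      apply (intro sum.cong refl)
      apply (subgoal_tac "m - x = Suc (m - Suc x)")
       apply (simp only:)
       apply (simp add: algebra_simps)
      apply simp
      done
    also have "\<dots> = real m * t * (\<Sum>j<m. real (stirling m (Suc j)) * real (Stirling (Suc j) k) * t ^ (m - Suc j))"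
      by (simp add: sum_distrib_left)
    also have "(\<Sum>j<m. real (stirling m (Suc j)) * real (Stirling (Suc j) k) * t ^ (m - Suc j))
       = Bc t m k - real (stirling m 0) * real (Stirling 0 k) * t ^ m"
      unfolding Bc_def
      apply (cases m)
       apply simp
      apply (simp only: sum.atMost_Suc_shift lessThan_Suc_atMost)
      apply (simp del: stirling.simps)
      done
    finally show ?thesis by (cases m) simp_all
  qed
  finally show ?thesis by simp
qed

lemma Bc_rec0: "Bc t (Suc m) 0 = real m * t * Bc t m 0"
  by (subst Bc_Suc_split) simp

lemma Bc_recS: "Bc t (Suc m) (Suc k) = (real (Suc k) + real m * t) * Bc t m (Suc k) + Bc t m k"
  by (subst Bc_Suc_split) (simp add: Bc_def sum.distrib algebra_simps sum_distrib_left)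

lemma A_rec: "A_coef \<alpha> (Suc m) k = -(real k - real m * (1 - \<alpha>)) * A_coef \<alpha> m k + real k * A_coef \<alpha> m (k - 1)"
proof (cases k)
  case 0 then show ?thesis by (simp add: A_Bc Bc_rec0 algebra_simps)
next
  case (Suc j) then show ?thesis by (simp add: A_Bc Bc_recS algebra_simps)
qed

lemma A_big: "m < k \<Longrightarrow> A_coef \<alpha> m k = 0"
  by (simp add: A_coef_def)

lemma A_00: "A_coef \<alpha> 0 0 = 1" by (simp add: A_coef_def)

lemma A_m0: "m \<ge> 1 \<Longrightarrow> A_coef \<alpha> m 0 = 0"
  unfolding A_coef_def
proof -
  assume m: "m \<ge> 1"
  have h: "\<And>l. real (stirling m l) * real (Stirling l 0) * (\<alpha> - 1) ^ (m - l) = 0"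
  proof -
    fix l show "real (stirling m l) * real (Stirling l 0) * (\<alpha> - 1) ^ (m - l) = 0"
      using m by (cases l) simp_all
  qed
  then show "(-1) ^ (m + 0) * fact 0 * (\<Sum>l = 0..m. real (stirling m l) * real (Stirling l 0) * (\<alpha> - 1) ^ (m - l)) = 0"
    by (simp only: h sum.neutral_const)
qed



definition EE :: "real \<Rightarrow> real \<Rightarrow> real \<Rightarrow> real" where
  "EE \<alpha> c x = exp_ext \<alpha> c (- x)"
definition uu :: "real \<Rightarrow> real \<Rightarrow> real \<Rightarrow> real" where
  "uu \<alpha> c x = 1 - (- x) / c_alpha \<alpha> c"
definition TT :: "real \<Rightarrow> real \<Rightarrow> nat \<Rightarrow> nat \<Rightarrow> real \<Rightarrow> real" where
  "TT \<alpha> c m k x = c * EE \<alpha> c x powr (real k - real m * (1 - \<alpha>)) / (c + EE \<alpha> c x) ^ (k + 1)"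
definition GG :: "real \<Rightarrow> real \<Rightarrow> nat \<Rightarrow> real \<Rightarrow> real" where
  "GG \<alpha> c m x = (\<Sum>k\<le>m. A_coef \<alpha> m k * TT \<alpha> c m k x)"

lemma T_deriv_gen:
  fixes E :: "real \<Rightarrow> real"
  assumes dE: "(E has_real_derivative -(E x powr \<alpha>)) (at x)" and pos: "E x > 0" and c: "c > 0"
  shows "((\<lambda>y. c * E y powr p / (c + E y)^(k+1)) has_real_derivative
     (-p * (c * E x powr (p - 1 + \<alpha>) / (c+E x)^(k+1)) + real (Suc k) * (c * E x powr (p+\<alpha>) / (c+E x)^(Suc k+1)))) (at x)"
proof -
  have d1: "((\<lambda>y. E y powr p) has_real_derivative p * E x powr (p - 1) * -(E x powr \<alpha>)) (at x)"
    using DERIV_fun_powr[OF dE pos, of p] by simp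
  have d2: "((\<lambda>y. (c + E y)^(k+1)) has_real_derivative real (k+1) * (c+E x)^k * -(E x powr \<alpha>)) (at x)"
    using DERIV_power[OF DERIV_add[OF DERIV_const[of c] dE], where n="k+1"] by (simp add: algebra_simps)
  have D: "c + E x > 0" using c pos by simp
  have "((\<lambda>y. c * E y powr p / (c + E y)^(k+1)) has_real_derivative
     ((c * (p * E x powr (p - 1) * -(E x powr \<alpha>))) * (c+E x)^(k+1) - c * E x powr p * (real (k+1) * (c+E x)^k * -(E x powr \<alpha>))) / ((c+E x)^(k+1) * (c+E x)^(k+1))) (at x)"
    using DERIV_divide[OF DERIV_cmult[OF d1, of c] d2] D by simp
  moreover have "((c * (p * E x powr (p - 1) * -(E x powr \<alpha>))) * (c+E x)^(k+1) - c * E x powr p * (real (k+1) * (c+E x)^k * -(E x powr \<alpha>))) / ((c+E x)^(k+1) * (c+E x)^(k+1))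
     = -p * (c * E x powr (p - 1 + \<alpha>) / (c+E x)^(k+1)) + real (Suc k) * (c * E x powr (p+\<alpha>) / (c+E x)^(Suc k+1))"
  proof -
    have r1: "E x powr (p - 1 + \<alpha>) = E x powr (p - 1) * E x powr \<alpha>" by (rule powr_add)
    have r3: "E x powr p = E x powr (p - 1) * E x"
      using powr_add[of "E x" "p-1" 1] pos by simp
    have r2: "E x powr (p + \<alpha>) = E x powr (p - 1) * E x * E x powr \<alpha>"
      by (simp add: powr_add r3)
    have gen: "\<And>q e a D::real. D > 0 \<Longrightarrow> ((c * (p * q * -a)) * D^(k+1) - c * (q * e) * (real (k+1) * D^k * -a)) / (D^(k+1) * D^(k+1))
       = -p * (c * (q * a) / D^(k+1)) + real (Suc k) * (c * (q * e * a) / D^(Suc k+1))"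
      by (simp add: field_simps)
    show ?thesis unfolding r1 r2 r3 using gen[OF D] by simp
  qed
  ultimately show ?thesis by simp
qed

lemma TT_deriv:
  assumes dE: "(EE \<alpha> c has_real_derivative -(EE \<alpha> c x powr \<alpha>)) (at x)" and pos: "EE \<alpha> c x > 0" and c: "c > 0"
  shows "(TT \<alpha> c m k has_real_derivative
     (-(real k - real m * (1 - \<alpha>)) * TT \<alpha> c (Suc m) k x + real (Suc k) * TT \<alpha> c (Suc m) (Suc k) x)) (at x)"
proof -
  have e1: "real k - real m * (1 - \<alpha>) - 1 + \<alpha> = real k - real (Suc m) * (1 - \<alpha>)" by (simp add: algebra_simps)
  have e2: "real k - real m * (1 - \<alpha>) + \<alpha> = real (Suc k) - real (Suc m) * (1 - \<alpha>)" by (simp add: algebra_simps)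
  show ?thesis
    using T_deriv_gen[OF dE pos c, of "real k - real m * (1 - \<alpha>)" k]
    unfolding TT_def e1 e2 by (simp add: fun_eq_iff)
qed

lemma GG_deriv:
  assumes dE: "(EE \<alpha> c has_real_derivative -(EE \<alpha> c x powr \<alpha>)) (at x)" and pos: "EE \<alpha> c x > 0" and c: "c > 0"
  shows "(GG \<alpha> c m has_real_derivative GG \<alpha> c (Suc m) x) (at x)"
proof -
  let ?T = "\<lambda>k. TT \<alpha> c (Suc m) k x"
  let ?p = "\<lambda>k. real k - real m * (1 - \<alpha>)"
  have "(GG \<alpha> c m has_real_derivative (\<Sum>k\<le>m. A_coef \<alpha> m k * (-(?p k) * ?T k + real (Suc k) * ?T (Suc k)))) (at x)"
    unfolding GG_def[abs_def]
    by (intro DERIV_sum DERIV_cmult TT_deriv[OF dE pos c])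
  moreover have "(\<Sum>k\<le>m. A_coef \<alpha> m k * (-(?p k) * ?T k + real (Suc k) * ?T (Suc k))) = GG \<alpha> c (Suc m) x"
  proof -
    have "GG \<alpha> c (Suc m) x = (\<Sum>k\<le>Suc m. -(?p k) * A_coef \<alpha> m k * ?T k) + (\<Sum>k\<le>Suc m. real k * A_coef \<alpha> m (k - 1) * ?T k)"
      unfolding GG_def A_rec by (simp add: sum.distrib[symmetric] algebra_simps)
    also have "(\<Sum>k\<le>Suc m. -(?p k) * A_coef \<alpha> m k * ?T k) = (\<Sum>k\<le>m. -(?p k) * A_coef \<alpha> m k * ?T k)"
      by (simp add: A_big)
    also have "(\<Sum>k\<le>Suc m. real k * A_coef \<alpha> m (k - 1) * ?T k) = (\<Sum>k\<le>m. real (Suc k) * A_coef \<alpha> m k * ?T (Suc k))"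
      by (subst sum.atMost_Suc_shift) simp
    finally show ?thesis by (simp add: sum.distrib[symmetric] algebra_simps)
  qed
  ultimately show ?thesis by simp
qed



lemma ca_ne: "c > 0 \<Longrightarrow> \<alpha> \<noteq> 1 \<Longrightarrow> c_alpha \<alpha> c \<noteq> 0"
  by (simp add: c_alpha_def)
lemma ca_neg: "c > 0 \<Longrightarrow> \<alpha> < 1 \<Longrightarrow> c_alpha \<alpha> c < 0"
proof -
  assume "c > 0" "\<alpha> < 1"
  then have "1 / (\<alpha> - 1) < 0" "c powr (1 - \<alpha>) > 0" by simp_all
  then show ?thesis unfolding c_alpha_def by (rule mult_neg_pos)
qed

lemma h_lt: "(ca::real) \<noteq> 0 \<Longrightarrow> 1 + x / ca = (ca + x) / ca"
  by (simp add: field_simps)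
lemma h_neg: "(ca::real) < 0 \<Longrightarrow> (0 < 1 + x / ca) = (x < -ca) \<and> (0 \<le> 1 + x / ca) = (x \<le> -ca)"
  by (simp add: h_lt zero_less_divide_iff zero_le_divide_iff) linarith
lemma h_pos: "(ca::real) > 0 \<Longrightarrow> (0 < 1 + x / ca) = (x > -ca) \<and> (0 \<le> 1 + x / ca) = (x \<ge> -ca)"
  by (simp add: h_lt zero_less_divide_iff zero_le_divide_iff) linarith
lemma ca_pos: "c > 0 \<Longrightarrow> \<alpha> > 1 \<Longrightarrow> c_alpha \<alpha> c > 0"
  by (simp add: c_alpha_def)

lemma EE_eq: "\<alpha> \<noteq> 1 \<Longrightarrow> EE \<alpha> c x = c * uu \<alpha> c x powr (1 / (1 - \<alpha>))"
  by (simp add: EE_def exp_ext_def uu_def)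
lemma EE_eq1: "EE 1 c x = c * exp (- x)"
  by (simp add: EE_def exp_ext_def)

lemma dom_iff: "c > 0 \<Longrightarrow> \<alpha> \<noteq> 1 \<Longrightarrow> x \<in> dom_sigma \<alpha> c \<longleftrightarrow> uu \<alpha> c x \<ge> 0"
proof -
  assume c: "c > 0" and a: "\<alpha> \<noteq> 1"
  show ?thesis
  proof (cases "\<alpha> < 1")
    case True
    have "uu \<alpha> c x \<ge> 0 \<longleftrightarrow> x \<le> - c_alpha \<alpha> c" using h_neg[OF ca_neg[OF c True]] by (simp add: uu_def)
    then show ?thesis using True a by (simp add: dom_sigma_def)
  next
    case False
    then have g: "\<alpha> > 1" using a by simp
    have "uu \<alpha> c x \<ge> 0 \<longleftrightarrow> x \<ge> - c_alpha \<alpha> c" using h_pos[OF ca_pos[OF c g]] by (simp add: uu_def)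
    then show ?thesis using g a by (simp add: dom_sigma_def)
  qed
qed

lemma bnd_iff: assumes "c > 0" "\<alpha> \<noteq> 1" shows "uu \<alpha> c x = 0 \<longleftrightarrow> x = - c_alpha \<alpha> c"
  using ca_ne[OF assms] by (auto simp: uu_def h_lt)

lemma uu_lt: "c > 0 \<Longrightarrow> \<alpha> < 1 \<Longrightarrow> uu \<alpha> c x > 0 \<longleftrightarrow> x < - c_alpha \<alpha> c"
  using h_neg[OF ca_neg[of c \<alpha>]] by (simp add: uu_def)
lemma uu_gt: "c > 0 \<Longrightarrow> \<alpha> > 1 \<Longrightarrow> uu \<alpha> c x > 0 \<longleftrightarrow> x > - c_alpha \<alpha> c"
  using h_pos[OF ca_pos[of c \<alpha>]] by (simp add: uu_def)

lemma EE_pos: "c > 0 \<Longrightarrow> (\<alpha> = 1 \<or> uu \<alpha> c x > 0) \<Longrightarrow> EE \<alpha> c x > 0"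
  by (cases "\<alpha> = 1") (auto simp: EE_eq EE_eq1)

lemma EE_deriv:
  assumes c: "c > 0" and u: "\<alpha> = 1 \<or> uu \<alpha> c x > 0"
  shows "(EE \<alpha> c has_real_derivative -(EE \<alpha> c x powr \<alpha>)) (at x)"
proof (cases "\<alpha> = 1")
  case True
  have "((\<lambda>x. c * exp (- x)) has_real_derivative -(c * exp (-x))) (at x)"
    by (auto intro!: derivative_eq_intros)
  then show ?thesis using True c by (simp add: EE_eq1[abs_def])
next
  case False
  let ?b = "1 / (1 - \<alpha>)" and ?ca = "c_alpha \<alpha> c"
  have up: "uu \<alpha> c x > 0" using u False by simp
  have du: "(uu \<alpha> c has_real_derivative 1 / ?ca) (at x)"
    unfolding uu_def[abs_def] using ca_ne[OF c False] by (auto intro!: derivative_eq_intros)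
  have "((\<lambda>y. c * uu \<alpha> c y powr ?b) has_real_derivative c * (?b * uu \<alpha> c x powr (?b - 1) * (1 / ?ca))) (at x)"
    using DERIV_cmult[OF DERIV_fun_powr[OF du up, of ?b], of c] by simp
  moreover have "c * (?b * uu \<alpha> c x powr (?b - 1) * (1 / ?ca)) = -((c * uu \<alpha> c x powr ?b) powr \<alpha>)"
  proof -
    have "(c * uu \<alpha> c x powr ?b) powr \<alpha> = c powr \<alpha> * uu \<alpha> c x powr (?b * \<alpha>)"
      using c up by (simp add: powr_mult powr_powr)
    also have "?b * \<alpha> = ?b - 1" using False by (simp add: field_simps)
    finally have 1: "(c * uu \<alpha> c x powr ?b) powr \<alpha> = c powr \<alpha> * uu \<alpha> c x powr (?b - 1)" .
    have cc: "c powr \<alpha> * c powr (1 - \<alpha>) = c" using c by (simp add: powr_add[symmetric])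
    have "c * ?b * (1 / ?ca) = -(c powr \<alpha>)"
      unfolding c_alpha_def using False c cc
      by (simp add: field_simps)
    then have e: "c * ?b * (1 / ?ca) = -(c powr \<alpha>)" .
    have "c * (?b * uu \<alpha> c x powr (?b - 1) * (1 / ?ca)) = (c * ?b * (1 / ?ca)) * uu \<alpha> c x powr (?b - 1)"
      by (simp only: mult_ac)
    also have "\<dots> = -(c powr \<alpha> * uu \<alpha> c x powr (?b - 1))" by (simp only: e mult_minus_left)
    finally show ?thesis unfolding 1 .
  qed
  moreover have "EE \<alpha> c = (\<lambda>y. c * uu \<alpha> c y powr ?b)" by (rule ext) (simp add: EE_eq False)
  ultimately show ?thesis by simp
qed



definition gg :: "real \<Rightarrow> real \<Rightarrow> nat \<Rightarrow> real \<Rightarrow> real" where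
  "gg \<alpha> c m x = (if m = 0 then sigtron \<alpha> c x else sigtron_nth_deriv \<alpha> c m x)"

lemma gg_int:
  assumes c: "c > 0" and u: "\<alpha> = 1 \<or> uu \<alpha> c x > 0"
  shows "gg \<alpha> c m x = GG \<alpha> c m x"
proof -
  have dom: "x \<in> dom_sigma \<alpha> c"
    using u dom_iff[OF c, of \<alpha> x] by (auto simp: dom_sigma_def)
  have nb: "\<not> (\<alpha> > 1 \<and> x = - c_alpha \<alpha> c)"
    using u bnd_iff[OF c, of \<alpha> x] by auto
  have E: "EE \<alpha> c x > 0" using EE_pos[OF c u] .
  show ?thesis
  proof (cases m)
    case 0
    then show ?thesis using dom nb E
      by (auto simp: gg_def GG_def TT_def sigtron_def sigma_ext_def EE_def[symmetric] A_00)
  next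
    case (Suc m')
    have "GG \<alpha> c m x = A_coef \<alpha> m 0 * TT \<alpha> c m 0 x + (\<Sum>k=1..m. A_coef \<alpha> m k * TT \<alpha> c m k x)"
      unfolding GG_def atMost_atLeast0 by (subst sum.atLeast_Suc_atMost) simp_all
    also have "\<dots> = (\<Sum>k=1..m. F_term \<alpha> c m k x)"
      using Suc by (simp add: A_m0 F_term_def TT_def EE_def)
    moreover have "sigtron_nth_deriv \<alpha> c m x = (\<Sum>k=1..m. F_term \<alpha> c m k x)"
      using dom nb by (auto simp: sigtron_nth_deriv_def)
    ultimately show ?thesis using Suc by (simp add: gg_def)
  qed
qed

lemma gg_ext:
  assumes c: "c > 0" and a: "\<alpha> \<noteq> 1" and u: "uu \<alpha> c x < 0"
  shows "gg \<alpha> c m x = (if m = 0 then (if \<alpha> < 1 then 1 else 0) else 0)"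
proof -
  have nd: "x \<notin> dom_sigma \<alpha> c" using dom_iff[OF c a, of x] u by simp
  show ?thesis
  proof (cases "\<alpha> < 1")
    case True
    have "x > - c_alpha \<alpha> c" using u uu_lt[OF c True, of x] bnd_iff[OF c a, of x] by auto
    moreover have "- c_alpha \<alpha> c > 0" using ca_neg[OF c True] by simp
    ultimately show ?thesis using nd True by (simp add: gg_def sigtron_def sigtron_nth_deriv_def perceptron_def)
  next
    case False
    then have g: "\<alpha> > 1" using a by simp
    have "x < - c_alpha \<alpha> c" using u uu_gt[OF c g, of x] bnd_iff[OF c a, of x] by auto
    moreover have "- c_alpha \<alpha> c < 0" using ca_pos[OF c g] by simp
    ultimately show ?thesis using nd g by (simp add: gg_def sigtron_def sigtron_nth_deriv_def perceptron_def)
  qed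
qed

lemma uu_cont: "continuous_on UNIV (uu \<alpha> c)"
proof -
  have "uu \<alpha> c = (\<lambda>x. 1 + x * inverse (c_alpha \<alpha> c))"
    by (simp add: uu_def fun_eq_iff divide_inverse)
  then show ?thesis by (simp add: continuous_intros)
qed

lemma gg_deriv_off:
  assumes c: "c > 0" and u: "\<alpha> = 1 \<or> uu \<alpha> c x \<noteq> 0"
  shows "(gg \<alpha> c m has_real_derivative gg \<alpha> c (Suc m) x) (at x)"
proof (cases "\<alpha> = 1 \<or> uu \<alpha> c x > 0")
  case True
  define S where "S = (if \<alpha> = 1 then UNIV else {y. uu \<alpha> c y > 0})"
  have oS: "open S" unfolding S_def
    using open_Collect_less[OF continuous_on_const uu_cont, of 0 \<alpha> c] by auto
  have xS: "x \<in> S" using True by (auto simp: S_def)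
  have eq: "\<And>y. y \<in> S \<Longrightarrow> GG \<alpha> c m y = gg \<alpha> c m y"
    using gg_int[OF c] by (auto simp: S_def split: if_splits)
  have "(GG \<alpha> c m has_real_derivative GG \<alpha> c (Suc m) x) (at x)"
    by (rule GG_deriv[OF EE_deriv[OF c True] EE_pos[OF c True] c])
  then have "(gg \<alpha> c m has_real_derivative GG \<alpha> c (Suc m) x) (at x)"
    by (rule has_field_derivative_transform_within_open[OF _ oS xS eq])
  then show ?thesis using gg_int[OF c True] by simp
next
  case False
  then have a: "\<alpha> \<noteq> 1" and ux: "uu \<alpha> c x < 0" using u by auto
  define S where "S = {y. uu \<alpha> c y < 0}"
  have oS: "open S" unfolding S_def
    using open_Collect_less[OF uu_cont continuous_on_const, of \<alpha> c 0] by auto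
  have xS: "x \<in> S" using ux by (auto simp: S_def)
  have eq: "\<And>y. y \<in> S \<Longrightarrow> (if m = 0 then (if \<alpha> < 1 then 1 else 0) else 0) = gg \<alpha> c m y"
    using gg_ext[OF c a] by (auto simp: S_def)
  have "((\<lambda>y. gg \<alpha> c m y) has_real_derivative 0) (at x)"
    by (rule has_field_derivative_transform_within_open[OF DERIV_const oS xS eq])
  then show ?thesis using gg_ext[OF c a ux, of "Suc m"] by simp
qed



lemma L2:
  fixes E :: "'a \<Rightarrow> real"
  assumes E: "filterlim E at_top F" and c: "c > 0" and p: "p < real k + 1"
  shows "((\<lambda>y. c * E y powr p / (c + E y)^(k+1)) \<longlongrightarrow> 0) F"
proof (rule tendsto_sandwich)
  have ev: "eventually (\<lambda>y. 1 \<le> E y) F" using E by (simp add: filterlim_at_top)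
  show "eventually (\<lambda>y. 0 \<le> c * E y powr p / (c + E y)^(k+1)) F"
    using ev by eventually_elim (use c in simp)
  show "eventually (\<lambda>y. c * E y powr p / (c + E y)^(k+1) \<le> c * E y powr (p - (real k + 1))) F"
    using ev
  proof eventually_elim
    case (elim y)
    then have Ep: "E y > 0" by simp
    have "c * E y powr p / (c + E y)^(k+1) \<le> c * E y powr p / E y ^ (k+1)"
      using Ep c by (intro divide_left_mono power_mono mult_pos_pos) auto
    also have "E y ^ (k+1) = E y powr (real k + 1)" using powr_realpow[OF Ep, of "k+1"] by (simp add: add.commute)
    also have "c * E y powr p / E y powr (real k + 1) = c * E y powr (p - (real k + 1))"
      by (simp add: powr_diff)
    finally show ?case .
  qed
  show "((\<lambda>y. 0) \<longlongrightarrow> (0::real)) F" by simp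
  have "((\<lambda>y. E y powr (p - (real k + 1))) \<longlongrightarrow> 0) F"
    by (rule tendsto_neg_powr[OF _ E]) (use p in simp)
  then show "((\<lambda>y. c * E y powr (p - (real k + 1))) \<longlongrightarrow> 0) F"
    by (rule tendsto_mult_right_zero)
qed

lemma lim_gt:
  assumes c: "c > 0" and a: "\<alpha> > 1" and u0: "(uu \<alpha> c \<longlongrightarrow> 0) F" and up: "eventually (\<lambda>y. uu \<alpha> c y > 0) F"
    and m: "real m * (\<alpha> - 1) < 1"
  shows "(GG \<alpha> c m \<longlongrightarrow> 0) F"
proof -
  let ?b = "1 / (1 - \<alpha>)"
  have b: "- ?b > 0" using a by (simp add: divide_neg_pos)
  have "filterlim (\<lambda>y. inverse (uu \<alpha> c y powr (- ?b))) at_top F"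
    by (rule filterlim_inverse_at_top[OF tendsto_zero_powrI[OF u0 tendsto_const _ b]])
       (use up in \<open>auto elim: eventually_mono\<close>)
  then have "filterlim (\<lambda>y. c * inverse (uu \<alpha> c y powr (- ?b))) at_top F"
    by (rule filterlim_tendsto_pos_mult_at_top[OF tendsto_const c])
  moreover have "\<And>y. c * inverse (uu \<alpha> c y powr (- ?b)) = EE \<alpha> c y"
    using a by (simp add: EE_eq powr_minus[symmetric])
  ultimately have E: "filterlim (EE \<alpha> c) at_top F" by simp
  have "((\<lambda>y. \<Sum>k\<le>m. A_coef \<alpha> m k * TT \<alpha> c m k y) \<longlongrightarrow> 0) F"
  proof (rule tendsto_null_sum, rule tendsto_mult_right_zero)
    fix k assume "k \<in> {..m}"
    have "real k - real m * (1 - \<alpha>) < real k + 1" using m by (simp add: algebra_simps)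
    then show "(TT \<alpha> c m k \<longlongrightarrow> 0) F" unfolding TT_def[abs_def] by (rule L2[OF E c])
  qed
  then show ?thesis by (simp add: GG_def[abs_def])
qed

lemma lim_lt:
  assumes c: "c > 0" and a: "\<alpha> < 1" and u0: "(uu \<alpha> c \<longlongrightarrow> 0) F" and up: "eventually (\<lambda>y. uu \<alpha> c y > 0) F"
  shows "(EE \<alpha> c \<longlongrightarrow> 0) F" "eventually (\<lambda>y. EE \<alpha> c y > 0) F"
proof -
  let ?b = "1 / (1 - \<alpha>)"
  have b: "?b > 0" using a by simp
  have "((\<lambda>y. c * uu \<alpha> c y powr ?b) \<longlongrightarrow> 0) F"
    by (rule tendsto_mult_right_zero[OF tendsto_zero_powrI[OF u0 tendsto_const _ b]])
       (use up in \<open>auto elim: eventually_mono\<close>)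
  moreover have "EE \<alpha> c = (\<lambda>y. c * uu \<alpha> c y powr ?b)" by (rule ext) (use a in \<open>simp add: EE_eq\<close>)
  ultimately show "(EE \<alpha> c \<longlongrightarrow> 0) F" by simp
  show "eventually (\<lambda>y. EE \<alpha> c y > 0) F"
    using up by eventually_elim (use c in \<open>simp add: EE_pos\<close>)
qed

lemma lim_lt_m:
  assumes c: "c > 0" and a: "\<alpha> < 1" and u0: "(uu \<alpha> c \<longlongrightarrow> 0) F" and up: "eventually (\<lambda>y. uu \<alpha> c y > 0) F"
    and m1: "m \<ge> 1" and m: "real m * (1 - \<alpha>) < 1"
  shows "(GG \<alpha> c m \<longlongrightarrow> 0) F"
proof -
  note E = lim_lt[OF c a u0 up]
  have "((\<lambda>y. \<Sum>k\<le>m. A_coef \<alpha> m k * TT \<alpha> c m k y) \<longlongrightarrow> 0) F"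
  proof (rule tendsto_null_sum)
    fix k assume "k \<in> {..m}"
    show "((\<lambda>y. A_coef \<alpha> m k * TT \<alpha> c m k y) \<longlongrightarrow> 0) F"
    proof (cases "k = 0")
      case True then show ?thesis using m1 by (simp add: A_m0)
    next
      case False
      then have p: "real k - real m * (1 - \<alpha>) > 0" using m by simp
      have "((\<lambda>y. EE \<alpha> c y powr (real k - real m * (1 - \<alpha>))) \<longlongrightarrow> 0) F"
        by (rule tendsto_zero_powrI[OF E(1) tendsto_const _ p]) (use E(2) in \<open>auto elim: eventually_mono\<close>)
      then have "((\<lambda>y. c * EE \<alpha> c y powr (real k - real m * (1 - \<alpha>)) / (c + EE \<alpha> c y) ^ (k+1)) \<longlongrightarrow> c * 0 / (c + 0) ^ (k+1)) F"
        using c by (intro tendsto_intros E(1)) auto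
      then have "(TT \<alpha> c m k \<longlongrightarrow> 0) F" by (simp add: TT_def[abs_def])
      then show ?thesis by (rule tendsto_mult_right_zero)
    qed
  qed
  then show ?thesis by (simp add: GG_def[abs_def])
qed

lemma lim_lt_0:
  assumes c: "c > 0" and a: "\<alpha> < 1" and u0: "(uu \<alpha> c \<longlongrightarrow> 0) F" and up: "eventually (\<lambda>y. uu \<alpha> c y > 0) F"
  shows "(GG \<alpha> c 0 \<longlongrightarrow> 1) F"
proof -
  note E = lim_lt[OF c a u0 up]
  have "((\<lambda>y. c / (c + EE \<alpha> c y)) \<longlongrightarrow> c / (c + 0)) F"
    using c by (intro tendsto_intros E(1)) auto
  then have "((\<lambda>y. c / (c + EE \<alpha> c y)) \<longlongrightarrow> 1) F" using c by simp
  moreover have "eventually (\<lambda>y. c / (c + EE \<alpha> c y) = GG \<alpha> c 0 y) F"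
    using E(2) by eventually_elim (simp add: GG_def TT_def A_00)
  ultimately show ?thesis by (rule Lim_transform_eventually)
qed



lemma EE_bnd: "c > 0 \<Longrightarrow> \<alpha> < 1 \<Longrightarrow> EE \<alpha> c (- c_alpha \<alpha> c) = 0"
  using bnd_iff[of c \<alpha> "- c_alpha \<alpha> c"] by (simp add: EE_eq)

lemma gg_bnd:
  assumes c: "c > 0" and a: "\<alpha> \<noteq> 1"
  shows "gg \<alpha> c m (- c_alpha \<alpha> c) = (if m = 0 \<and> \<alpha> < 1 then 1 else 0)"
proof -
  let ?x = "- c_alpha \<alpha> c"
  have dom: "?x \<in> dom_sigma \<alpha> c" using dom_iff[OF c a, of ?x] bnd_iff[OF c a, of ?x] by simp
  show ?thesis
  proof (cases "\<alpha> < 1")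
    case True
    have E: "exp_ext \<alpha> c (c_alpha \<alpha> c) = 0" using EE_bnd[OF c True] by (simp add: EE_def)
    show ?thesis using True dom c
      by (simp add: gg_def sigtron_def sigma_ext_def sigtron_nth_deriv_def F_term_def E)
  next
    case False
    then have "\<alpha> > 1" using a by simp
    then show ?thesis using dom by (simp add: gg_def sigtron_def sigma_ext_def sigtron_nth_deriv_def)
  qed
qed

lemma ev_left: "eventually (\<lambda>y. y < x) (at_left (x::real))"
  by (simp add: eventually_at_filter)
lemma ev_right: "eventually (\<lambda>y. y > x) (at_right (x::real))"
  by (simp add: eventually_at_filter)

lemma bnd_cont:
  assumes c: "c > 0" and a: "\<alpha> \<noteq> 1" and m1: "real m * (1 - \<alpha>) < 1" and m2: "real m * (\<alpha> - 1) < 1"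
  shows "(gg \<alpha> c m \<longlongrightarrow> gg \<alpha> c m (- c_alpha \<alpha> c)) (at (- c_alpha \<alpha> c))"
proof -
  let ?x = "- c_alpha \<alpha> c"
  let ?L = "if m = 0 \<and> \<alpha> < 1 then 1 else (0::real)"
  have ux: "uu \<alpha> c ?x = 0" using bnd_iff[OF c a] by simp
  have ucont: "(uu \<alpha> c \<longlongrightarrow> 0) (at ?x)"
    using uu_cont[of \<alpha> c] ux by (metis UNIV_I continuous_on_def)
  have ul: "(uu \<alpha> c \<longlongrightarrow> 0) (at_left ?x)" and ur: "(uu \<alpha> c \<longlongrightarrow> 0) (at_right ?x)"
    using tendsto_mono[OF at_le[OF subset_UNIV] ucont] by auto
  have ext_lim: "(gg \<alpha> c m \<longlongrightarrow> ?L) F" if "eventually (\<lambda>y. uu \<alpha> c y < 0) F" for F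
  proof -
    have "eventually (\<lambda>y. ?L = gg \<alpha> c m y) F"
      using that by eventually_elim (use gg_ext[OF c a] in auto)
    then show ?thesis by (rule Lim_transform_eventually[OF tendsto_const])
  qed
  have int_lim: "(gg \<alpha> c m \<longlongrightarrow> ?L) F" if "eventually (\<lambda>y. uu \<alpha> c y > 0) F" "(GG \<alpha> c m \<longlongrightarrow> ?L) F" for F
  proof -
    have "eventually (\<lambda>y. GG \<alpha> c m y = gg \<alpha> c m y) F"
      using that(1) by eventually_elim (use gg_int[OF c] in auto)
    then show ?thesis by (rule Lim_transform_eventually[OF that(2)])
  qed
  have "(gg \<alpha> c m \<longlongrightarrow> ?L) (at ?x)"
  proof (cases "\<alpha> < 1")
    case True
    have el: "eventually (\<lambda>y. uu \<alpha> c y > 0) (at_left ?x)"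
      using ev_left by (rule eventually_mono) (use uu_lt[OF c True] in auto)
    have er: "eventually (\<lambda>y. uu \<alpha> c y < 0) (at_right ?x)"
      using ev_right by (rule eventually_mono) (use uu_lt[OF c True] bnd_iff[OF c a] in \<open>smt (verit)\<close>)
    have G: "(GG \<alpha> c m \<longlongrightarrow> ?L) (at_left ?x)"
    proof (cases "m = 0")
      case True then show ?thesis using lim_lt_0[OF c \<open>\<alpha> < 1\<close> ul el] \<open>\<alpha> < 1\<close> by simp
    next
      case False then show ?thesis using lim_lt_m[OF c \<open>\<alpha> < 1\<close> ul el _ m1] by simp
    qed
    show ?thesis by (rule filterlim_split_at[OF int_lim[OF el G] ext_lim[OF er]])
  next
    case False
    then have g: "\<alpha> > 1" using a by simp
    have er: "eventually (\<lambda>y. uu \<alpha> c y > 0) (at_right ?x)"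
      using ev_right by (rule eventually_mono) (use uu_gt[OF c g] in auto)
    have el: "eventually (\<lambda>y. uu \<alpha> c y < 0) (at_left ?x)"
      using ev_left by (rule eventually_mono) (use uu_gt[OF c g] bnd_iff[OF c a] in \<open>smt (verit)\<close>)
    have G: "(GG \<alpha> c m \<longlongrightarrow> ?L) (at_right ?x)"
      using lim_gt[OF c g ur er m2] g by simp
    show ?thesis by (rule filterlim_split_at[OF ext_lim[OF el] int_lim[OF er G]])
  qed
  then show ?thesis using gg_bnd[OF c a, of m] by simp
qed

lemma bnd_deriv:
  assumes c: "c > 0" and a: "\<alpha> \<noteq> 1" and m1: "real (Suc m) * (1 - \<alpha>) < 1" and m2: "real (Suc m) * (\<alpha> - 1) < 1"
  shows "(gg \<alpha> c m has_real_derivative gg \<alpha> c (Suc m) (- c_alpha \<alpha> c)) (at (- c_alpha \<alpha> c))"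
proof -
  let ?x = "- c_alpha \<alpha> c"
  have mono: "real m * t < 1" if "real (Suc m) * t < 1" for t :: real
  proof (cases "t > 0")
    case True
    then have "real m * t \<le> real (Suc m) * t" by (intro mult_right_mono) auto
    then show ?thesis using that by linarith
  next
    case False
    then have "real m * t \<le> 0" by (simp add: mult_nonneg_nonpos)
    then show ?thesis by linarith
  qed
  have m1': "real m * (1 - \<alpha>) < 1" and m2': "real m * (\<alpha> - 1) < 1"
    using mono[OF m1] mono[OF m2] .
  have v: "gg \<alpha> c (Suc m) ?x = 0" using gg_bnd[OF c a] by simp
  have f0: "((\<lambda>y. gg \<alpha> c m y - gg \<alpha> c m ?x) \<longlongrightarrow> 0) (at ?x)"
    using LIM_zero[OF bnd_cont[OF c a m1' m2']] .
  have g0: "((\<lambda>y. y - ?x) \<longlongrightarrow> 0) (at ?x)"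
    using LIM_zero[OF tendsto_ident_at] .
  have ne: "eventually (\<lambda>y. y - ?x \<noteq> 0) (at ?x)"
    by (simp add: eventually_at_filter)
  have df: "eventually (\<lambda>y. ((\<lambda>y. gg \<alpha> c m y - gg \<alpha> c m ?x) has_real_derivative gg \<alpha> c (Suc m) y) (at y)) (at ?x)"
  proof -
    have "eventually (\<lambda>y. y \<noteq> ?x) (at ?x)" by (simp add: eventually_at_filter)
    then show ?thesis
    proof eventually_elim
      case (elim y)
      then have "uu \<alpha> c y \<noteq> 0" using bnd_iff[OF c a] by simp
      then have "(gg \<alpha> c m has_real_derivative gg \<alpha> c (Suc m) y) (at y)"
        using gg_deriv_off[OF c] by auto
      from DERIV_diff[OF this DERIV_const[of "gg \<alpha> c m ?x"]] show ?case by simp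
    qed
  qed
  have dg: "eventually (\<lambda>y. ((\<lambda>y. y - ?x) has_real_derivative 1) (at y)) (at ?x)"
    by (intro always_eventually allI) (auto intro!: derivative_eq_intros)
  have fl: "((\<lambda>y. gg \<alpha> c (Suc m) y / 1) \<longlongrightarrow> 0) (at ?x)"
    using bnd_cont[OF c a m1 m2] v by simp
  have "((\<lambda>y. (gg \<alpha> c m y - gg \<alpha> c m ?x) / (y - ?x)) \<longlongrightarrow> 0) (at ?x)"
    by (rule lhopital[OF f0 g0 ne _ df dg fl]) simp
  then have "(gg \<alpha> c m has_real_derivative 0) (at ?x)"
    by (simp add: has_field_derivative_iff)
  then show ?thesis using v by simp
qed



theorem theorem2:
  fixes c \<alpha> :: real and n :: nat
  assumes "c > 0" and "\<alpha> \<ge> 0" and "n \<ge> 1"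
    and "1 - 1 / real n < \<alpha>" and "\<alpha> < 1 + 1 / real n"
  shows "(\<forall>m<n. \<forall>x. ((deriv ^^ m) (sigtron \<alpha> c) has_real_derivative
             (deriv ^^ Suc m) (sigtron \<alpha> c) x) (at x))
       \<and> continuous_on UNIV ((deriv ^^ n) (sigtron \<alpha> c))
       \<and> (\<forall>x. (deriv ^^ n) (sigtron \<alpha> c) x = sigtron_nth_deriv \<alpha> c n x)"
proof -
  note c = assms(1)
  have np: "real n > 0" using assms(3) by simp
  have hn1: "real n * (1 - \<alpha>) < 1"
  proof -
    have "1 - \<alpha> < 1 / real n" using assms(4) by simp
    then show ?thesis using np by (simp add: field_simps)
  qed
  have hn2: "real n * (\<alpha> - 1) < 1"
  proof -
    have "\<alpha> - 1 < 1 / real n" using assms(5) by simp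
    then show ?thesis using np by (simp add: field_simps)
  qed
  have mono: "real m * t < 1" if "real n * t < 1" "m \<le> n" for t :: real and m
  proof (cases "t > 0")
    case True
    then have "real m * t \<le> real n * t" using that(2) by (intro mult_right_mono) auto
    then show ?thesis using that by linarith
  next
    case False
    then have "real m * t \<le> 0" by (simp add: mult_nonneg_nonpos)
    then show ?thesis by linarith
  qed
  have D: "(gg \<alpha> c m has_real_derivative gg \<alpha> c (Suc m) x) (at x)" if "m < n" for m x
  proof (cases "\<alpha> = 1 \<or> uu \<alpha> c x \<noteq> 0")
    case True
    then show ?thesis by (rule gg_deriv_off[OF c])
  next
    case False
    then have a: "\<alpha> \<noteq> 1" and x: "x = - c_alpha \<alpha> c" using bnd_iff[OF c, of \<alpha> x] by auto
    have "Suc m \<le> n" using that by simp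
    then show ?thesis unfolding x
      by (intro bnd_deriv[OF c a] mono[OF hn1] mono[OF hn2])
  qed
  have I: "(deriv ^^ m) (sigtron \<alpha> c) = gg \<alpha> c m" if "m \<le> n" for m
    using that
  proof (induction m)
    case 0
    then show ?case by (simp add: gg_def[abs_def])
  next
    case (Suc m)
    then have "(deriv ^^ m) (sigtron \<alpha> c) = gg \<alpha> c m" by simp
    moreover have "deriv (gg \<alpha> c m) = gg \<alpha> c (Suc m)"
      using D[of m] Suc.prems by (intro ext DERIV_imp_deriv) auto
    ultimately show ?case by simp
  qed
  have C: "isCont (gg \<alpha> c n) x" for x
  proof (cases "\<alpha> = 1 \<or> uu \<alpha> c x \<noteq> 0")
    case True
    show ?thesis using gg_deriv_off[OF c True, of n] by (rule DERIV_isCont)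
  next
    case False
    then have a: "\<alpha> \<noteq> 1" and x: "x = - c_alpha \<alpha> c" using bnd_iff[OF c, of \<alpha> x] by auto
    show ?thesis unfolding x isCont_def
      by (rule bnd_cont[OF c a hn1 hn2])
  qed
  show ?thesis
  proof (intro conjI allI impI)
    fix m x assume "m < n"
    then show "((deriv ^^ m) (sigtron \<alpha> c) has_real_derivative (deriv ^^ Suc m) (sigtron \<alpha> c) x) (at x)"
      using I[of m] I[of "Suc m"] D[of m x] by simp
  next
    show "continuous_on UNIV ((deriv ^^ n) (sigtron \<alpha> c))"
      using I[of n] C by (simp add: continuous_at_imp_continuous_on)
  next
    fix x show "(deriv ^^ n) (sigtron \<alpha> c) x = sigtron_nth_deriv \<alpha> c n x"
      using I[of n] assms(3) by (simp add: gg_def)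
  qed
qed

end
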